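(* Let $G$ be a crown-free linear $3$-graph on $n$ vertices, and let $s$ be the number of vertices of $G$ of degree at least $6$. If $s \leq 2$, then the number of edges of $G$ satisfies $$|E(G)| \leq \frac{10(n-s)}{7}.$$
   Context: A linear $3$-graph $G=(V,E)$ consists of a finite vertex set $V$ and a collection $E$ of $3$-element subsets of $V$ (edges) such that any two distinct edges share at most one vertex. The degree $d(v)$ of a vertex $v$ is the number of edges containing $v$. The crown $C_{13}$ is the linear $3$-graph on $9$ vertices $\{a,b,c,d,e,f,g,h,i\}$ with edges $\{a,b,c\},\{a,d,e\},\{b,f,g\},\{c,h,i\}$. A linear $3$-graph is crown-free if it contains no copy of $C_{13}$, i.e. no four of its edges together with an injective assignment of the nine vertices form the crown. *)

theory Defs
  imports Complex_Main
begin

definition linear_3graph :: "'a set \<Rightarrow> 'a set set \<Rightarrow> bool" where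
  "linear_3graph V E \<longleftrightarrow> finite V \<and>
     (\<forall>e\<in>E. e \<subseteq> V \<and> card e = 3) \<and>
     (\<forall>e\<in>E. \<forall>f\<in>E. e \<noteq> f \<longrightarrow> card (e \<inter> f) \<le> 1)"

definition degree :: "'a set set \<Rightarrow> 'a \<Rightarrow> nat" where
  "degree E v = card {e \<in> E. v \<in> e}"

definition has_crown :: "'a set set \<Rightarrow> bool" where
  "has_crown E \<longleftrightarrow> (\<exists>a b c d e f g h i.
     distinct [a, b, c, d, e, f, g, h, i] \<and>
     {a, b, c} \<in> E \<and> {a, d, e} \<in> E \<and> {b, f, g} \<in> E \<and> {c, h, i} \<in> E)"

definition crown_free :: "'a set set \<Rightarrow> bool" where
  "crown_free E \<longleftrightarrow> \<not> has_crown E"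

end

theory Submission
  imports Defs
begin


lemma lin2:
  assumes "linear_3graph V E" "f \<in> E" "g \<in> E" "x \<in> f" "x \<in> g" "y \<in> f" "y \<in> g" "x \<noteq> y"
  shows "f = g"
proof (rule ccontr)
  assume "f \<noteq> g"
  then have "card (f \<inter> g) \<le> 1" using assms(1-3) unfolding linear_3graph_def by blast
  moreover have "{x,y} \<subseteq> f \<inter> g" using assms by auto
  moreover have "finite (f \<inter> g)"
    using assms(1,2) unfolding linear_3graph_def by (meson finite_Int finite_subset)
  ultimately have "card {x,y} \<le> 1" by (meson card_mono le_trans)
  then show False using assms(8) by simp
qed

lemma lin_ne:
  assumes "linear_3graph V E" "f \<in> E" "g \<in> E" "x \<in> f" "x \<in> g" "y \<in> g" "f \<noteq> g" "x \<noteq> y"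
  shows "y \<notin> f"
  using lin2[OF assms(1-3)] assms(4-8) by blast

lemma finE: assumes "linear_3graph V E" shows "finite E"
proof -
  have "E \<subseteq> Pow V" using assms unfolding linear_3graph_def by auto
  then show ?thesis using assms unfolding linear_3graph_def by (meson finite_Pow_iff finite_subset)
qed

lemma edge3:
  assumes "linear_3graph V E" "f \<in> E" "v \<in> f"
  shows "\<exists>y z. f = {v,y,z} \<and> distinct [v,y,z]"
proof -
  have "card f = 3" using assms unfolding linear_3graph_def by auto
  then obtain p q r where f: "f = {p,q,r}" "distinct [p,q,r]" by (metis card_3_iff distinct_length_2_or_more distinct_singleton)
  show ?thesis using assms(3) f by (auto simp: insert_commute)
qed

lemma card_ins_le: "card (insert x A) \<le> Suc (card A)"
  by (cases "finite A") (auto simp: card_insert_if)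

lemma card_one_edge:
  assumes "linear_3graph V E" "x \<noteq> v"
  shows "card {f \<in> E. v \<in> f \<and> x \<in> f} \<le> 1"
proof -
  have "\<forall>f\<in>{f \<in> E. v \<in> f \<and> x \<in> f}. \<forall>g\<in>{f \<in> E. v \<in> f \<and> x \<in> f}. f = g"
    using lin2[OF assms(1)] assms(2) by blast
  then show ?thesis using card_le_Suc0_iff_eq finE[OF assms(1)]
    by (metis (no_types, lifting) One_nat_def card_le_Suc0_iff_eq finite_subset mem_Collect_eq subsetI)
qed

lemma pickF:
  assumes "linear_3graph V E" "finite F" "{f\<in>E. v \<in> f \<and> f \<inter> X \<noteq> {}} \<subseteq> F" "card F < degree E v"
  shows "\<exists>y z. {v,y,z} \<in> E \<and> distinct [v,y,z] \<and> y \<notin> X \<and> z \<notin> X"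
proof -
  have "\<exists>f\<in>E. v \<in> f \<and> f \<inter> X = {}"
  proof (rule ccontr)
    assume "\<not> ?thesis"
    then have "{f\<in>E. v \<in> f} \<subseteq> F" using assms(3) by blast
    then have "degree E v \<le> card F" unfolding degree_def using assms(2) card_mono by blast
    then show False using assms(4) by simp
  qed
  then obtain f where "f \<in> E" "v \<in> f" "f \<inter> X = {}" by blast
  with edge3[OF assms(1) this(1,2)] show ?thesis by auto
qed

lemma pickX:
  assumes "linear_3graph V E" "finite X" "v \<notin> X" "card X < degree E v"
  shows "\<exists>y z. {v,y,z} \<in> E \<and> distinct [v,y,z] \<and> y \<notin> X \<and> z \<notin> X"
proof -
  let ?F = "\<Union>x\<in>X. {f \<in> E. v \<in> f \<and> x \<in> f}"
  have "card ?F \<le> (\<Sum>x\<in>X. card {f \<in> E. v \<in> f \<and> x \<in> f})" by (rule card_UN_le[OF assms(2)])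
  also have "\<dots> \<le> (\<Sum>x\<in>X. 1)" 
    by (rule sum_mono, rule card_one_edge[OF assms(1)]) (use assms(3) in blast)
  finally have "card ?F \<le> card X" by simp
  moreover have "finite ?F" using finE[OF assms(1)] by (rule rev_finite_subset) blast
  moreover have "{f\<in>E. v \<in> f \<and> f \<inter> X \<noteq> {}} \<subseteq> ?F" by blast
  ultimately show ?thesis using pickF[OF assms(1)] assms(4) by (meson le_less_trans)
qed

lemma crownI:
  assumes "crown_free E" "{a,b,c} \<in> E" "{a,d,e} \<in> E" "{b,f,g} \<in> E" "{c,h,i} \<in> E"
    "distinct [a,b,c,d,e,f,g,h,i]"
  shows False
  using assms unfolding crown_free_def has_crown_def by blast

lemma c3: "card {x,y,z} \<le> 3" using card_ins_le[of x "{y,z}"] card_ins_le[of y "{z}"] by simp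
lemma c4: "card {w,x,y,z} \<le> 4" using card_ins_le[of w "{x,y,z}"] c3[of x y z] by simp
lemma c5: "card {v,w,x,y,z} \<le> 5" using card_ins_le[of v "{w,x,y,z}"] c4[of w x y z] by simp

lemma crown246:
  assumes L: "linear_3graph V E" and cf: "crown_free E" and e: "{a,b,c} \<in> E" "distinct [a,b,c]"
    and da: "degree E a \<ge> 2" and db: "degree E b \<ge> 4" and dc: "degree E c \<ge> 6"
  shows False
proof -
  obtain d d' where A: "{a,d,d'} \<in> E" "distinct [a,d,d']" "d \<notin> {b}" "d' \<notin> {b}"
    using pickX[OF L, of "{b}" a] e da by auto
  have A2: "d \<noteq> c" "d' \<noteq> c" using lin2[OF L A(1) e(1), of a c] A e by auto
  obtain f g where B: "{b,f,g} \<in> E" "distinct [b,f,g]" "f \<notin> {c,d,d'}" "g \<notin> {c,d,d'}"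
    using pickX[OF L, of "{c,d,d'}" b] e db A A2 c3[of c d d'] by auto
  have B2: "f \<noteq> a" "g \<noteq> a" using lin2[OF L B(1) e(1), of a b] B e by auto
  obtain h i where C: "{c,h,i} \<in> E" "distinct [c,h,i]" "h \<notin> {a,d,d',f,g}" "i \<notin> {a,d,d',f,g}"
    using pickX[OF L, of "{a,d,d',f,g}" c] e dc A A2 B B2 c5[of a d d' f g] by auto
  have C2: "h \<noteq> b" "i \<noteq> b" using lin2[OF L C(1) e(1), of b c] C e by auto
  show False using crownI[OF cf e(1) A(1) B(1) C(1)] A A2 B B2 C C2 e by auto
qed



lemma cover:
  assumes L: "linear_3graph V E" and cf: "crown_free E" and e: "{x,y,z} \<in> E" "distinct [x,y,z]"
    and dx: "degree E x \<ge> 5" and dy: "degree E y \<ge> 4"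
    and g: "{z,p,q} \<in> E" "distinct [z,p,q]" "{z,p,q} \<noteq> {x,y,z}"
  shows "\<exists>w. {x,p,w} \<in> E \<and> distinct [x,p,w]"
proof (rule ccontr)
  assume nw: "\<not> ?thesis"
  have g2: "p \<noteq> x" "q \<noteq> x" "p \<noteq> y" "q \<noteq> y"
    using lin2[OF L g(1) e(1), of z x] lin2[OF L g(1) e(1), of z y] g e by auto
  obtain r s where B: "{y,r,s} \<in> E" "distinct [y,r,s]" "r \<notin> {x,p,q}" "s \<notin> {x,p,q}"
    using pickX[OF L, of "{x,p,q}" y] e dy g2 c3[of x p q] by auto
  have B2: "r \<noteq> z" "s \<noteq> z" using lin2[OF L B(1) e(1), of y z] B e by auto
  obtain d d' where A: "{x,d,d'} \<in> E" "distinct [x,d,d']" "d \<notin> {y,q,r,s}" "d' \<notin> {y,q,r,s}"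
    using pickX[OF L, of "{y,q,r,s}" x] e dx B B2 g2 c4[of y q r s] by auto
  have A2: "d \<noteq> z" "d' \<noteq> z" using lin2[OF L A(1) e(1), of x z] A e by auto
  have A3: "d \<noteq> p" "d' \<noteq> p" using A nw by (auto simp: insert_commute)
  show False using crownI[OF cf e(1) A(1) B(1) g(1)] A A2 A3 B B2 g g2 e by auto
qed

lemma deg_v1:
  assumes L: "linear_3graph V E" and cf: "crown_free E"
    and dist: "distinct [a,b,c,v1,v2,v3,v4,v5,v6,v7,v8]"
    and e: "{a,b,c} \<in> E"
    and a12: "{a,v1,v2} \<in> E" and a34: "{a,v3,v4} \<in> E" and a56: "{a,v5,v6} \<in> E" and a78: "{a,v7,v8} \<in> E"
    and b23: "{b,v2,v3} \<in> E" and b41: "{b,v4,v1} \<in> E" and b67: "{b,v6,v7} \<in> E" and b85: "{b,v8,v5} \<in> E"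
    and C: "\<forall>f\<in>E. c \<in> f \<longrightarrow> v1 \<in> f \<longrightarrow> f = {c,v1,v3}"
    and d1: "{c,v1,v3} \<in> E \<or> {c,v2,v4} \<in> E"
    and d2: "{c,v1,v3} \<in> E \<or> {c,v5,v7} \<in> E"
    and d3: "{c,v1,v3} \<in> E \<or> {c,v6,v8} \<in> E"
    and d4: "{c,v2,v4} \<in> E \<or> {c,v5,v7} \<in> E"
    and d5: "{c,v2,v4} \<in> E \<or> {c,v6,v8} \<in> E"
    and d6: "{c,v5,v7} \<in> E \<or> {c,v6,v8} \<in> E"
  shows "degree E v1 \<le> 3"
proof (rule ccontr)
  assume "\<not> ?thesis"
  then have "\<not> {f\<in>E. v1 \<in> f} \<subseteq> {{a,v1,v2},{b,v4,v1},{c,v1,v3}}"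
    using card_mono[of "{{a,v1,v2},{b,v4,v1},{c,v1,v3}}" "{f\<in>E. v1 \<in> f}"]
      c3[of "{a,v1,v2}" "{b,v4,v1}" "{c,v1,v3}"] unfolding degree_def by fastforce
  then obtain \<delta> where "\<delta> \<in> E" "v1 \<in> \<delta>" and nd: "\<delta> \<noteq> {a,v1,v2}" "\<delta> \<noteq> {b,v4,v1}" "\<delta> \<noteq> {c,v1,v3}" by blast
  then obtain u w where dl: "\<delta> = {v1,u,w}" "distinct [v1,u,w]" using edge3[OF L] by blast
  have D: "{v1,u,w} \<in> E" using \<open>\<delta> \<in> E\<close> dl by simp
  have na: "a \<notin> \<delta>" by (rule lin_ne[OF L \<open>\<delta> \<in> E\<close> a12 \<open>v1 \<in> \<delta>\<close>]) (use nd dist in auto)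
  have nb: "b \<notin> \<delta>" by (rule lin_ne[OF L \<open>\<delta> \<in> E\<close> b41 \<open>v1 \<in> \<delta>\<close>]) (use nd dist in auto)
  have n2: "v2 \<notin> \<delta>" by (rule lin_ne[OF L \<open>\<delta> \<in> E\<close> a12 \<open>v1 \<in> \<delta>\<close>]) (use nd dist in auto)
  have n4: "v4 \<notin> \<delta>" by (rule lin_ne[OF L \<open>\<delta> \<in> E\<close> b41 \<open>v1 \<in> \<delta>\<close>]) (use nd dist in auto)
  have nc: "c \<notin> \<delta>" using C \<open>\<delta> \<in> E\<close> \<open>v1 \<in> \<delta>\<close> nd(3) by blast
  have ua: "u \<noteq> a" "w \<noteq> a" "u \<noteq> b" "w \<noteq> b" "u \<noteq> c" "w \<noteq> c"
    "u \<noteq> v2" "w \<noteq> v2" "u \<noteq> v4" "w \<noteq> v4" using na nb nc n2 n4 dl by auto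
  note ub = ua note uc = ua note u2 = ua note u4 = ua
  have c13': "{v1,c,v3} = {c,v1,v3}" "{v2,c,v4} = {c,v2,v4}" "{v3,a,v4} = {a,v3,v4}" "{v2,b,v3} = {b,v2,v3}"
    by (simp_all add: insert_commute)
  show False
  proof (cases "v3 \<in> {u,w}")
    case True
    obtain x where D3: "{v1,v3,x} \<in> E" "x \<in> {u,w}" "x \<noteq> v3"
    proof (cases "u = v3")
      case True
      then show ?thesis using that[of w] D dl by auto
    next
      case False
      then have "w = v3" using \<open>v3 \<in> {u,w}\<close> by simp
      then show ?thesis using that[of u] D dl by (auto simp add: insert_commute)
    qed
    have "v3 \<in> \<delta>" using True dl by simp
    have "{c,v1,v3} \<notin> E"
    proof
      assume "{c,v1,v3} \<in> E"
      have "c \<notin> \<delta>" by fact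
      moreover have "\<delta> = {c,v1,v3}" by (rule lin2[OF L \<open>\<delta> \<in> E\<close> \<open>{c,v1,v3} \<in> E\<close> \<open>v1 \<in> \<delta>\<close> _ \<open>v3 \<in> \<delta>\<close>]) (use dist in simp_all)
      ultimately show False by simp
    qed
    then have c24: "{v2,c,v4} \<in> E" using d1 c13' by simp
    have x: "x \<noteq> a" "x \<noteq> c" "x \<noteq> v2" "x \<noteq> v4" "x \<noteq> v1" using D3(2) ua dl by auto
    show False
    proof (cases "x \<in> {v5,v6}")
      case True
      show False by (rule crownI[OF cf a12 a78 D3(1) c24]) (use True x dist D3 in auto)
    next
      case False
      show False by (rule crownI[OF cf a12 a56 D3(1) c24]) (use False x dist D3 in auto)
    qed
  next
    case False
    have b23': "{v2,b,v3} \<in> E" using b23 c13' by simp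
    have n56: "u \<in> {v5,v6} \<or> w \<in> {v5,v6}"
    proof (rule ccontr)
      assume H: "\<not> ?thesis"
      show False by (rule crownI[OF cf a12 a56 D b23']) (use H False dist ua dl in auto)
    qed
    have n78: "u \<in> {v7,v8} \<or> w \<in> {v7,v8}"
    proof (rule ccontr)
      assume H: "\<not> ?thesis"
      show False by (rule crownI[OF cf a12 a78 D b23']) (use H False dist ua dl in auto)
    qed
    have a34': "{v3,a,v4} \<in> E" using a34 c13' by simp
    obtain p q where P: "{v1,p,q} \<in> E" "p \<in> {v5,v6}" "q \<in> {v7,v8}"
    proof (cases "u \<in> {v5,v6}")
      case True
      then have "w \<in> {v7,v8}" using n78 dist by auto
      then show ?thesis using that[of u w] True D by simp
    next
      case False
      then have "w \<in> {v5,v6}" "u \<in> {v7,v8}" using n56 n78 dist by auto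
      then show ?thesis using that[of w u] D by (simp add: insert_commute)
    qed
    have "p = v5 \<and> q = v7 \<or> p = v6 \<and> q = v8"
    proof -
      have "\<not> (p = v6 \<and> q = v7)"
      proof
        assume pq: "p = v6 \<and> q = v7"
        have "{v1,p,q} = {b,v6,v7}" by (rule lin2[OF L P(1) b67, of v6 v7]) (use pq dist in simp_all)
        then have "b \<in> {v1,p,q}" by simp
        then show False using dist pq by auto
      qed
      moreover have "\<not> (p = v5 \<and> q = v8)"
      proof
        assume pq: "p = v5 \<and> q = v8"
        have "{v1,p,q} = {b,v8,v5}" by (rule lin2[OF L P(1) b85, of v5 v8]) (use pq dist in simp_all)
        then have "b \<in> {v1,p,q}" by simp
        then show False using dist pq by auto
      qed
      ultimately show ?thesis using P by auto
    qed
    then show False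
    proof
      assume pq: "p = v5 \<and> q = v7"
      have "{c,v5,v7} \<notin> E"
      proof
        assume "{c,v5,v7} \<in> E"
        have "{v1,p,q} = {c,v5,v7}" by (rule lin2[OF L P(1) \<open>{c,v5,v7} \<in> E\<close>, of v5 v7]) (use pq dist in simp_all)
        then have "c \<in> {v1,p,q}" by simp
        then show False using dist pq by auto
      qed
      then have "{v1,c,v3} \<in> E" "{c,v6,v8} \<in> E" using d2 d3 d6 c13' by auto
      show False by (rule crownI[OF cf \<open>{v1,c,v3} \<in> E\<close> P(1) \<open>{c,v6,v8} \<in> E\<close> a34']) (use pq dist in auto)
    next
      assume pq: "p = v6 \<and> q = v8"
      have "{c,v6,v8} \<notin> E"
      proof
        assume "{c,v6,v8} \<in> E"
        have "{v1,p,q} = {c,v6,v8}" by (rule lin2[OF L P(1) \<open>{c,v6,v8} \<in> E\<close>, of v6 v8]) (use pq dist in simp_all)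
        then have "c \<in> {v1,p,q}" by simp
        then show False using dist pq by auto
      qed
      then have "{v1,c,v3} \<in> E" "{c,v5,v7} \<in> E" using d2 d3 d6 c13' by auto
      show False by (rule crownI[OF cf \<open>{v1,c,v3} \<in> E\<close> P(1) \<open>{c,v5,v7} \<in> E\<close> a34']) (use pq dist in auto)
    qed
  qed
qed



lemma lin_outA:
  assumes "linear_3graph V E" "f \<in> E" "g \<in> E" "x \<in> f" "x \<in> g" "y \<in> g" "z \<in> f" "z \<notin> g" "x \<noteq> y"
  shows "y \<notin> f"
  using lin2[OF assms(1-3)] assms(4-9) by blast

lemma lin_outB:
  assumes "linear_3graph V E" "f \<in> E" "g \<in> E" "x \<in> f" "x \<in> g" "y \<in> g" "z \<in> g" "z \<notin> f" "x \<noteq> y"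
  shows "y \<notin> f"
  using lin2[OF assms(1-3)] assms(4-9) by blast

lemma step5:
  assumes L: "linear_3graph V E" and cf: "crown_free E" and e: "{a,b,c} \<in> E" "distinct [a,b,c]"
    and da: "degree E a = 5" and db: "degree E b = 5" and dc: "degree E c \<ge> 4"
    and g: "{c,p,q} \<in> E" "distinct [c,p,q]" "a \<noteq> p" "a \<noteq> q"
    and ap: "{a,p,p'} \<in> E" "distinct [a,p,p']"
    and aq: "{a,q,q'} \<in> E" "distinct [a,q,q']"
    and bp: "{b,p,t} \<in> E" "distinct [b,p,t]"
  shows "t = q'"
proof (rule ccontr)
  assume tq: "t \<noteq> q'"
  have "b \<notin> {c,p,q}" by (rule lin_outB[OF L g(1) e(1), of c b a]) (use e g in auto)
  then have pq: "p \<noteq> b" "q \<noteq> b" by auto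
  have "b \<notin> {a,p,p'}" by (rule lin_outA[OF L ap(1) e(1), of a b p]) (use e g pq in auto)
  moreover have "c \<notin> {a,p,p'}" by (rule lin_outA[OF L ap(1) e(1), of a c p]) (use e g pq in auto)
  moreover have "q \<notin> {a,p,p'}" by (rule lin_outA[OF L ap(1) g(1), of p q a]) (use e g pq in auto)
  moreover have "b \<notin> {a,q,q'}" by (rule lin_outA[OF L aq(1) e(1), of a b q]) (use e g pq in auto)
  moreover have "c \<notin> {a,q,q'}" by (rule lin_outA[OF L aq(1) e(1), of a c q]) (use e g pq in auto)
  moreover have "p \<notin> {a,q,q'}" by (rule lin_outA[OF L aq(1) g(1), of q p a]) (use e g pq in auto)
  ultimately have p': "p' \<noteq> b" "p' \<noteq> c" "p' \<noteq> q" "q' \<noteq> b" "q' \<noteq> c" "q' \<noteq> p" by auto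
  have "q' \<notin> {a,p,p'}" by (rule lin_outA[OF L ap(1) aq(1), of a q' p]) (use e g pq p' aq in auto)
  then have pq': "p' \<noteq> q'" by auto
  have "a \<notin> {b,p,t}" by (rule lin_outA[OF L bp(1) e(1), of b a p]) (use e g pq in auto)
  moreover have "c \<notin> {b,p,t}" by (rule lin_outA[OF L bp(1) e(1), of b c p]) (use e g pq in auto)
  moreover have "q \<notin> {b,p,t}" by (rule lin_outA[OF L bp(1) g(1), of p q b]) (use e g pq in auto)
  moreover have "p' \<notin> {b,p,t}" by (rule lin_outA[OF L bp(1) ap(1), of p p' b]) (use e g pq ap p' in auto)
  ultimately have t: "t \<noteq> a" "t \<noteq> c" "t \<noteq> q" "t \<noteq> p'" by auto
  have e': "{a,c,b} \<in> E" using e by (simp add: insert_commute)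
  have bp': "{b,t,p} \<in> E" using bp by (simp add: insert_commute)
  have "{b,t,p} \<noteq> {a,c,b}" using t bp e by auto
  then obtain t' where at: "{a,t,t'} \<in> E" "distinct [a,t,t']"
    using cover[OF L cf e' _ _ _ bp'] e da dc bp by auto
  have tn: "t \<notin> {a,b,c}" "t \<notin> {a,p,p'}" "t \<notin> {a,q,q'}" using t tq bp by auto
  have "b \<notin> {a,t,t'}" by (rule lin_outA[OF L at(1) e(1), of a b t]) (use e tn in auto)
  moreover have "c \<notin> {a,t,t'}" by (rule lin_outA[OF L at(1) e(1), of a c t]) (use e tn in auto)
  moreover have "p \<notin> {a,t,t'}" by (rule lin_outA[OF L at(1) ap(1), of a p t]) (use ap tn in auto)
  moreover have "p' \<notin> {a,t,t'}" by (rule lin_outA[OF L at(1) ap(1), of a p' t]) (use ap tn in auto)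
  moreover have "q \<notin> {a,t,t'}" by (rule lin_outA[OF L at(1) aq(1), of a q t]) (use aq tn in auto)
  moreover have "q' \<notin> {a,t,t'}" by (rule lin_outA[OF L at(1) aq(1), of a q' t]) (use aq tn in auto)
  ultimately have t': "t' \<noteq> b" "t' \<noteq> c" "t' \<noteq> p" "t' \<noteq> q" by auto
  obtain f h where B: "{b,f,h} \<in> E" "distinct [b,f,h]" "f \<notin> {a,t',p,q}" "h \<notin> {a,t',p,q}"
    using pickX[OF L, of "{a,t',p,q}" b] db c4[of a t' p q] e t' pq by auto
  have "c \<notin> {b,f,h}" by (rule lin_outB[OF L B(1) e(1), of b c a]) (use e B in auto)
  moreover have "t \<notin> {b,f,h}" by (rule lin_outB[OF L B(1) bp(1), of b t p]) (use bp B in auto)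
  ultimately have fh: "f \<noteq> c" "h \<noteq> c" "f \<noteq> t" "h \<noteq> t" by auto
  show False
    by (rule crownI[OF cf e(1) at(1) B(1) g(1)]) (use e at B fh t t' g pq bp in auto)
qed



lemma sep: "x \<in> B \<Longrightarrow> x \<notin> A \<Longrightarrow> A \<noteq> B" by blast

lemma complete5:
  assumes L: "linear_3graph V E" and d: "degree E a = 5"
    and S: "S1 \<in> E" "S2 \<in> E" "S3 \<in> E" "S4 \<in> E" "S5 \<in> E"
    and aS: "a \<in> S1" "a \<in> S2" "a \<in> S3" "a \<in> S4" "a \<in> S5"
    and ds: "distinct [S1,S2,S3,S4,S5]"
  shows "\<forall>f\<in>E. a \<in> f \<longrightarrow> f = S1 \<or> f = S2 \<or> f = S3 \<or> f = S4 \<or> f = S5"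
proof -
  have sub: "{S1,S2,S3,S4,S5} \<subseteq> {f\<in>E. a \<in> f}" using S aS by auto
  have "card {S1,S2,S3,S4,S5} = 5" using distinct_card[OF ds] by simp
  moreover have "finite {f\<in>E. a \<in> f}" using finE[OF L] by simp
  ultimately have "{S1,S2,S3,S4,S5} = {f\<in>E. a \<in> f}"
    using card_subset_eq[OF _ sub] d unfolding degree_def by simp
  then show ?thesis by blast
qed

lemma deg_le3:
  assumes "{f\<in>E. c \<in> f} \<subseteq> {X,Y,Z}" shows "degree E c \<le> 3"
  unfolding degree_def using card_mono[OF _ assms] c3[of X Y Z] by simp



lemma sep': "x \<in> A \<Longrightarrow> x \<notin> B \<Longrightarrow> A \<noteq> B" by blast

lemma in5: "X = S1 \<or> X = S2 \<or> X = S3 \<or> X = S4 \<or> X = S5 \<Longrightarrow> w \<in> X \<Longrightarrow> w \<in> S1 \<union> S2 \<union> S3 \<union> S4 \<union> S5"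
  by auto

lemma struct1:
  assumes L: "linear_3graph V E" and cf: "crown_free E" and e: "{a,b,c} \<in> E" "distinct [a,b,c]"
    and da: "degree E a = 5" and db: "degree E b = 5" and dc: "degree E c \<ge> 4"
  shows "\<exists>v1 v2 v3 v4 v5 v6 v7 v8. distinct [a,b,c,v1,v2,v3,v4,v5,v6,v7,v8] \<and>
   {a,v1,v2} \<in> E \<and> {a,v3,v4} \<in> E \<and> {a,v5,v6} \<in> E \<and> {a,v7,v8} \<in> E \<and>
   {b,v2,v3} \<in> E \<and> {b,v4,v1} \<in> E \<and> {b,v6,v7} \<in> E \<and> {b,v8,v5} \<in> E \<and>
   (\<forall>f\<in>E. a \<in> f \<longrightarrow> f = {a,b,c} \<or> f = {a,v1,v2} \<or> f = {a,v3,v4} \<or> f = {a,v5,v6} \<or> f = {a,v7,v8})"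
proof -
  have e'': "{b,a,c} \<in> E" "distinct [b,a,c]" "{a,c,b} \<in> E" "distinct [a,c,b]" "{b,c,a} \<in> E" "distinct [b,c,a]"
    using e by (auto simp: insert_commute)
  obtain v1 v3 where G: "{c,v1,v3} \<in> E" "distinct [c,v1,v3]" "v1 \<notin> {a}" "v3 \<notin> {a}"
    using pickX[OF L, of "{a}" c] e dc by auto
  have "b \<notin> {c,v1,v3}" by (rule lin_outB[OF L G(1) e(1), of c b a]) (use e G in auto)
  then have G2: "v1 \<noteq> a" "v3 \<noteq> a" "v1 \<noteq> b" "v3 \<noteq> b" using G by auto
  have Gne: "{c,v1,v3} \<noteq> {a,b,c}" "{c,v3,v1} \<noteq> {a,b,c}" using sep[of a "{a,b,c}" "{c,v1,v3}"] sep[of a "{a,b,c}" "{c,v3,v1}"] G2 e(2) by auto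
  have G': "{c,v3,v1} \<in> E" "distinct [c,v3,v1]" using G by (auto simp: insert_commute)
  obtain v2 where A1: "{a,v1,v2} \<in> E" "distinct [a,v1,v2]"
    using cover[OF L cf e(1,2) _ _ G(1,2) Gne(1)] da db by auto
  obtain v4 where A3: "{a,v3,v4} \<in> E" "distinct [a,v3,v4]"
    using cover[OF L cf e(1,2) _ _ G'(1,2) Gne(2)] da db by auto
  have Gne': "{c,v1,v3} \<noteq> {b,a,c}" "{c,v3,v1} \<noteq> {b,a,c}" using sep[of a "{b,a,c}" "{c,v1,v3}"] sep[of a "{b,a,c}" "{c,v3,v1}"] G2 e(2) by auto
  obtain t1 where B1: "{b,v1,t1} \<in> E" "distinct [b,v1,t1]"
    using cover[OF L cf e''(1,2) _ _ G(1,2) Gne'(1)] da db by auto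
  obtain t3 where B3: "{b,v3,t3} \<in> E" "distinct [b,v3,t3]"
    using cover[OF L cf e''(1,2) _ _ G'(1,2) Gne'(2)] da db by auto
  have "t1 = v4" by (rule step5[OF L cf e da db dc G(1,2) _ _ A1 A3 B1]) (use G2 in auto)
  have "t3 = v2" by (rule step5[OF L cf e da db dc G'(1,2) _ _ A3 A1 B3]) (use G2 in auto)
  have b41: "{b,v4,v1} \<in> E" using B1 \<open>t1 = v4\<close> by (simp add: insert_commute)
  have b23: "{b,v2,v3} \<in> E" using B3 \<open>t3 = v2\<close> by (simp add: insert_commute)
  have "b \<notin> {a,v1,v2}" by (rule lin_outA[OF L A1(1) e(1), of a b v1]) (use e G G2 in auto)
  moreover have "c \<notin> {a,v1,v2}" by (rule lin_outA[OF L A1(1) e(1), of a c v1]) (use e G G2 in auto)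
  moreover have "v3 \<notin> {a,v1,v2}" by (rule lin_outA[OF L A1(1) G(1), of v1 v3 a]) (use e G G2 in auto)
  moreover have "b \<notin> {a,v3,v4}" by (rule lin_outA[OF L A3(1) e(1), of a b v3]) (use e G G2 in auto)
  moreover have "c \<notin> {a,v3,v4}" by (rule lin_outA[OF L A3(1) e(1), of a c v3]) (use e G G2 in auto)
  moreover have "v1 \<notin> {a,v3,v4}" by (rule lin_outA[OF L A3(1) G(1), of v3 v1 a]) (use e G G2 in auto)
  ultimately have v24: "v2 \<noteq> b" "v2 \<noteq> c" "v2 \<noteq> v3" "v4 \<noteq> b" "v4 \<noteq> c" "v4 \<noteq> v1" by auto
  have "v2 \<notin> {a,v3,v4}" by (rule lin_outA[OF L A3(1) A1(1), of a v2 v3]) (use A1 A3 v24 G in auto)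
  then have v24': "v2 \<noteq> v4" by auto
  have d7: "distinct [a,b,c,v1,v2,v3,v4]" using e G G2 A1 A3 v24 v24' by auto
  obtain p5 p6 where A5: "{a,p5,p6} \<in> E" "distinct [a,p5,p6]" "p5 \<notin> {b,v1,v3}" "p6 \<notin> {b,v1,v3}"
    using pickX[OF L, of "{b,v1,v3}" a] da c3[of b v1 v3] d7 by auto
  have "c \<notin> {a,p5,p6}" by (rule lin_outB[OF L A5(1) e(1), of a c b]) (use e A5 in auto)
  moreover have "v2 \<notin> {a,p5,p6}" by (rule lin_outB[OF L A5(1) A1(1), of a v2 v1]) (use A1 A5 in auto)
  moreover have "v4 \<notin> {a,p5,p6}" by (rule lin_outB[OF L A5(1) A3(1), of a v4 v3]) (use A3 A5 in auto)
  ultimately have p56: "p5 \<noteq> c" "p6 \<noteq> c" "p5 \<noteq> v2" "p6 \<noteq> v2" "p5 \<noteq> v4" "p6 \<noteq> v4" by auto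
  obtain p7 p8 where A7: "{a,p7,p8} \<in> E" "distinct [a,p7,p8]" "p7 \<notin> {b,v1,v3,p5}" "p8 \<notin> {b,v1,v3,p5}"
    using pickX[OF L, of "{b,v1,v3,p5}" a] da c4[of b v1 v3 p5] d7 A5 by auto
  have "c \<notin> {a,p7,p8}" by (rule lin_outB[OF L A7(1) e(1), of a c b]) (use e A7 in auto)
  moreover have "v2 \<notin> {a,p7,p8}" by (rule lin_outB[OF L A7(1) A1(1), of a v2 v1]) (use A1 A7 in auto)
  moreover have "v4 \<notin> {a,p7,p8}" by (rule lin_outB[OF L A7(1) A3(1), of a v4 v3]) (use A3 A7 in auto)
  moreover have "p6 \<notin> {a,p7,p8}" by (rule lin_outB[OF L A7(1) A5(1), of a p6 p5]) (use A5 A7 in auto)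
  ultimately have p78: "p7 \<noteq> c" "p8 \<noteq> c" "p7 \<noteq> v2" "p8 \<noteq> v2" "p7 \<noteq> v4" "p8 \<noteq> v4" "p7 \<noteq> p6" "p8 \<noteq> p6" by auto
  have d11: "distinct [a,b,c,v1,v2,v3,v4,p5,p6,p7,p8]" using d7 A5 A7 p56 p78 by auto
  have "{a,b,c} \<noteq> {a,v1,v2}" by (rule sep[of v1]) (use d11 in auto)
  moreover have "{a,b,c} \<noteq> {a,v3,v4}" by (rule sep[of v3]) (use d11 in auto)
  moreover have "{a,b,c} \<noteq> {a,p5,p6}" by (rule sep[of p5]) (use d11 in auto)
  moreover have "{a,b,c} \<noteq> {a,p7,p8}" by (rule sep[of p7]) (use d11 in auto)
  moreover have "{a,v1,v2} \<noteq> {a,v3,v4}" by (rule sep[of v3]) (use d11 in auto)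
  moreover have "{a,v1,v2} \<noteq> {a,p5,p6}" by (rule sep[of p5]) (use d11 in auto)
  moreover have "{a,v1,v2} \<noteq> {a,p7,p8}" by (rule sep[of p7]) (use d11 in auto)
  moreover have "{a,v3,v4} \<noteq> {a,p5,p6}" by (rule sep[of p5]) (use d11 in auto)
  moreover have "{a,v3,v4} \<noteq> {a,p7,p8}" by (rule sep[of p7]) (use d11 in auto)
  moreover have "{a,p5,p6} \<noteq> {a,p7,p8}" by (rule sep[of p7]) (use d11 in auto)
  ultimately have "distinct [{a,b,c},{a,v1,v2},{a,v3,v4},{a,p5,p6},{a,p7,p8}]" by simp
  then have acomp: "\<forall>f\<in>E. a \<in> f \<longrightarrow> f = {a,b,c} \<or> f = {a,v1,v2} \<or> f = {a,v3,v4} \<or> f = {a,p5,p6} \<or> f = {a,p7,p8}"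
    by (rule complete5[OF L da e(1) A1(1) A3(1) A5(1) A7(1), rotated -1]) simp_all
  have ain: "w \<in> {a,b,c,v1,v2,v3,v4,p5,p6,p7,p8}" if "{a,w,w'} \<in> E" for w w'
  proof -
    have "w \<in> {a,b,c} \<union> {a,v1,v2} \<union> {a,v3,v4} \<union> {a,p5,p6} \<union> {a,p7,p8}"
      by (rule in5[OF acomp[rule_format, OF that]]) simp_all
    then show ?thesis by blast
  qed
  have A5': "{a,p6,p5} \<in> E" "distinct [a,p6,p5]" using A5 by (auto simp: insert_commute)
  have A5ne: "{a,p6,p5} \<noteq> {b,c,a}" "{a,p5,p6} \<noteq> {b,c,a}"
    using sep'[of p5 "{a,p6,p5}" "{b,c,a}"] sep'[of p5 "{a,p5,p6}" "{b,c,a}"] d11 by auto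
  obtain u where U: "{b,p6,u} \<in> E" "distinct [b,p6,u]"
    using cover[OF L cf e''(5,6) _ _ A5'(1,2) A5ne(1)] db dc by auto
  obtain u2 where U2: "{b,p5,u2} \<in> E" "distinct [b,p5,u2]"
    using cover[OF L cf e''(5,6) _ _ A5(1,2) A5ne(2)] db dc by auto
  have U': "{b,u,p6} \<in> E" "distinct [b,u,p6]" using U by (auto simp: insert_commute)
  have U2': "{b,u2,p5} \<in> E" "distinct [b,u2,p5]" using U2 by (auto simp: insert_commute)
  have Une: "{b,u,p6} \<noteq> {a,c,b}" "{b,u2,p5} \<noteq> {a,c,b}"
    using sep'[of p6 "{b,u,p6}" "{a,c,b}"] sep'[of p5 "{b,u2,p5}" "{a,c,b}"] d11 by auto
  obtain w1 where "{a,u,w1} \<in> E" using cover[OF L cf e''(3,4) _ _ U' Une(1)] da dc by auto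
  then have uin: "u \<in> {a,b,c,v1,v2,v3,v4,p5,p6,p7,p8}" by (rule ain)
  obtain w2 where "{a,u2,w2} \<in> E" using cover[OF L cf e''(3,4) _ _ U2' Une(2)] da dc by auto
  then have u2in: "u2 \<in> {a,b,c,v1,v2,v3,v4,p5,p6,p7,p8}" by (rule ain)
  have "a \<notin> {b,p6,u}" by (rule lin_outA[OF L U(1) e(1), of b a p6]) (use d11 in auto)
  moreover have "c \<notin> {b,p6,u}" by (rule lin_outA[OF L U(1) e(1), of b c p6]) (use d11 in auto)
  moreover have "p5 \<notin> {b,p6,u}" by (rule lin_outA[OF L U(1) A5(1), of p6 p5 b]) (use d11 in auto)
  moreover have "v1 \<notin> {b,p6,u}" by (rule lin_outA[OF L U(1) b41, of b v1 p6]) (use d11 in auto)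
  moreover have "v4 \<notin> {b,p6,u}" by (rule lin_outA[OF L U(1) b41, of b v4 p6]) (use d11 in auto)
  moreover have "v2 \<notin> {b,p6,u}" by (rule lin_outA[OF L U(1) b23, of b v2 p6]) (use d11 in auto)
  moreover have "v3 \<notin> {b,p6,u}" by (rule lin_outA[OF L U(1) b23, of b v3 p6]) (use d11 in auto)
  ultimately have u78: "u = p7 \<or> u = p8" using uin U(2) by auto
  have "a \<notin> {b,p5,u2}" by (rule lin_outA[OF L U2(1) e(1), of b a p5]) (use d11 in auto)
  moreover have "c \<notin> {b,p5,u2}" by (rule lin_outA[OF L U2(1) e(1), of b c p5]) (use d11 in auto)
  moreover have "p6 \<notin> {b,p5,u2}" by (rule lin_outA[OF L U2(1) A5(1), of p5 p6 b]) (use d11 in auto)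
  moreover have "v1 \<notin> {b,p5,u2}" by (rule lin_outA[OF L U2(1) b41, of b v1 p5]) (use d11 in auto)
  moreover have "v4 \<notin> {b,p5,u2}" by (rule lin_outA[OF L U2(1) b41, of b v4 p5]) (use d11 in auto)
  moreover have "v2 \<notin> {b,p5,u2}" by (rule lin_outA[OF L U2(1) b23, of b v2 p5]) (use d11 in auto)
  moreover have "v3 \<notin> {b,p5,u2}" by (rule lin_outA[OF L U2(1) b23, of b v3 p5]) (use d11 in auto)
  moreover have "u \<notin> {b,p5,u2}" by (rule lin_outA[OF L U2(1) U(1), of b u p5]) (use d11 U(2) \<open>p5 \<notin> {b,p6,u}\<close> in auto)
  ultimately have u278: "u2 = p7 \<and> u = p8 \<or> u2 = p8 \<and> u = p7" using u2in U2(2) u78 by auto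
  then show ?thesis
  proof
    assume H: "u2 = p7 \<and> u = p8"
    have b67: "{b,p6,p8} \<in> E" using U H by simp
    have b85: "{b,p7,p5} \<in> E" using U2 H by (simp add: insert_commute)
    have a78: "{a,p8,p7} \<in> E" using A7 by (simp add: insert_commute)
    have d: "distinct [a,b,c,v1,v2,v3,v4,p5,p6,p8,p7]" using d11 by auto
    have ac: "\<forall>f\<in>E. a \<in> f \<longrightarrow> f = {a,b,c} \<or> f = {a,v1,v2} \<or> f = {a,v3,v4} \<or> f = {a,p5,p6} \<or> f = {a,p8,p7}"
      using acomp by (simp add: insert_commute)
    show ?thesis
      by (rule exI[of _ v1], rule exI[of _ v2], rule exI[of _ v3], rule exI[of _ v4], rule exI[of _ p5],
          rule exI[of _ p6], rule exI[of _ p8], rule exI[of _ p7], intro conjI; fact)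
  next
    assume H: "u2 = p8 \<and> u = p7"
    have b67: "{b,p6,p7} \<in> E" using U H by simp
    have b85: "{b,p8,p5} \<in> E" using U2 H by (simp add: insert_commute)
    show ?thesis
      by (rule exI[of _ v1], rule exI[of _ v2], rule exI[of _ v3], rule exI[of _ v4], rule exI[of _ p5],
          rule exI[of _ p6], rule exI[of _ p7], rule exI[of _ p8], intro conjI; fact)
  qed
qed



lemma diag_comb:
  assumes dist: "distinct [v1,v2,v3,v4,v5,v6,v7,v8]"
    and r: "r \<in> {v1,v2,v3,v4,v5,v6,v7,v8}" and s: "s \<in> {v1,v2,v3,v4,v5,v6,v7,v8}" and rs: "r \<noteq> s"
    and f1: "r \<in> {v1,v2,v6,v7} \<or> s \<in> {v1,v2,v6,v7}"
    and f2: "r \<in> {v1,v2,v8,v5} \<or> s \<in> {v1,v2,v8,v5}"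
    and f3: "r \<in> {v3,v4,v6,v7} \<or> s \<in> {v3,v4,v6,v7}"
    and f4: "r \<in> {v3,v4,v8,v5} \<or> s \<in> {v3,v4,v8,v5}"
    and f5: "r \<in> {v5,v6,v2,v3} \<or> s \<in> {v5,v6,v2,v3}"
    and f6: "r \<in> {v5,v6,v4,v1} \<or> s \<in> {v5,v6,v4,v1}"
    and f7: "r \<in> {v7,v8,v2,v3} \<or> s \<in> {v7,v8,v2,v3}"
    and f8: "r \<in> {v7,v8,v4,v1} \<or> s \<in> {v7,v8,v4,v1}"
    and l1: "\<not> (r \<in> {v1,v2} \<and> s \<in> {v1,v2})"
    and l2: "\<not> (r \<in> {v3,v4} \<and> s \<in> {v3,v4})"
    and l3: "\<not> (r \<in> {v5,v6} \<and> s \<in> {v5,v6})"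
    and l4: "\<not> (r \<in> {v7,v8} \<and> s \<in> {v7,v8})"
    and l5: "\<not> (r \<in> {v2,v3} \<and> s \<in> {v2,v3})"
    and l6: "\<not> (r \<in> {v4,v1} \<and> s \<in> {v4,v1})"
    and l7: "\<not> (r \<in> {v6,v7} \<and> s \<in> {v6,v7})"
    and l8: "\<not> (r \<in> {v8,v5} \<and> s \<in> {v8,v5})"
  shows "{r,s} = {v1,v3} \<or> {r,s} = {v2,v4} \<or> {r,s} = {v5,v7} \<or> {r,s} = {v6,v8}"
proof -
  have dr: "distinct [v8,v7,v6,v5,v4,v3,v2,v1]" using dist by auto
  have "(r = v1 \<and> s = v3) \<or> (r = v3 \<and> s = v1) \<or> (r = v2 \<and> s = v4) \<or> (r = v4 \<and> s = v2) \<or>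
        (r = v5 \<and> s = v7) \<or> (r = v7 \<and> s = v5) \<or> (r = v6 \<and> s = v8) \<or> (r = v8 \<and> s = v6)"
    using r s
  proof (elim insertE emptyE)
  qed (use rs f1 f2 f3 f4 f5 f6 f7 f8 l1 l2 l3 l4 l5 l6 l7 l8 dist dr in simp_all)
  then show ?thesis by (auto simp: insert_commute)
qed



lemma deg_drop:
  assumes A: "\<forall>f\<in>E. c \<in> f \<longrightarrow> f = X \<or> f = P \<or> f = Q \<or> f = R \<or> f = S"
    and "(P \<notin> E \<and> Q \<notin> E) \<or> (P \<notin> E \<and> R \<notin> E) \<or> (P \<notin> E \<and> S \<notin> E) \<or> (Q \<notin> E \<and> R \<notin> E) \<or> (Q \<notin> E \<and> S \<notin> E) \<or> (R \<notin> E \<and> S \<notin> E)"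
  shows "degree E c \<le> 3"
  using assms(2)
proof (elim disjE conjE)
  assume "P \<notin> E" "Q \<notin> E" then have "{f\<in>E. c \<in> f} \<subseteq> {X,R,S}" using A by auto
  then show ?thesis by (rule deg_le3)
next
  assume "P \<notin> E" "R \<notin> E" then have "{f\<in>E. c \<in> f} \<subseteq> {X,Q,S}" using A by auto
  then show ?thesis by (rule deg_le3)
next
  assume "P \<notin> E" "S \<notin> E" then have "{f\<in>E. c \<in> f} \<subseteq> {X,Q,R}" using A by auto
  then show ?thesis by (rule deg_le3)
next
  assume "Q \<notin> E" "R \<notin> E" then have "{f\<in>E. c \<in> f} \<subseteq> {X,P,S}" using A by auto
  then show ?thesis by (rule deg_le3)
next
  assume "Q \<notin> E" "S \<notin> E" then have "{f\<in>E. c \<in> f} \<subseteq> {X,P,R}" using A by auto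
  then show ?thesis by (rule deg_le3)
next
  assume "R \<notin> E" "S \<notin> E" then have "{f\<in>E. c \<in> f} \<subseteq> {X,P,Q}" using A by auto
  then show ?thesis by (rule deg_le3)
qed

lemma pick_c1: "f = X \<or> f = P \<or> f = Q \<or> f = R \<or> f = S \<Longrightarrow> w \<in> f \<Longrightarrow> w \<notin> X \<Longrightarrow> w \<notin> Q \<Longrightarrow> w \<notin> R \<Longrightarrow> w \<notin> S \<Longrightarrow> f = P" by auto
lemma pick_c2: "f = X \<or> f = P \<or> f = Q \<or> f = R \<or> f = S \<Longrightarrow> w \<in> f \<Longrightarrow> w \<notin> X \<Longrightarrow> w \<notin> P \<Longrightarrow> w \<notin> R \<Longrightarrow> w \<notin> S \<Longrightarrow> f = Q" by auto
lemma pick_c3: "f = X \<or> f = P \<or> f = Q \<or> f = R \<or> f = S \<Longrightarrow> w \<in> f \<Longrightarrow> w \<notin> X \<Longrightarrow> w \<notin> P \<Longrightarrow> w \<notin> Q \<Longrightarrow> w \<notin> S \<Longrightarrow> f = R" by auto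
lemma pick_c4: "f = X \<or> f = P \<or> f = Q \<or> f = R \<or> f = S \<Longrightarrow> w \<in> f \<Longrightarrow> w \<notin> X \<Longrightarrow> w \<notin> P \<Longrightarrow> w \<notin> Q \<Longrightarrow> w \<notin> R \<Longrightarrow> f = S" by auto



lemma lin_both:
  assumes "linear_3graph V E" "f \<in> E" "g \<in> E" "r \<in> f" "s \<in> f" "r \<in> g" "s \<in> g" "r \<noteq> s" "c \<in> f" "c \<notin> g"
  shows False
  using lin2[OF assms(1-3) assms(4,6,5,7,8)] assms(9,10) by simp

lemma out4: "f = X \<or> f = S1 \<or> f = S2 \<or> f = S3 \<or> f = S4 \<Longrightarrow> f \<noteq> X \<Longrightarrow> w \<in> f \<Longrightarrow> w \<noteq> v \<Longrightarrow> w \<in> (S1 \<union> S2 \<union> S3 \<union> S4) - {v}"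
  by auto

lemma L1:
  assumes L: "linear_3graph V E" and cf: "crown_free E" and e: "{a,b,c} \<in> E" "distinct [a,b,c]"
    and da: "degree E a = 5" and db: "degree E b = 5" and dc: "degree E c \<ge> 4"
  shows "\<forall>f\<in>E. \<forall>v\<in>{a,b,c}. \<forall>w\<in>f. v \<in> f \<longrightarrow> f \<noteq> {a,b,c} \<longrightarrow> w \<noteq> v \<longrightarrow> degree E w \<le> 3"
proof -
  obtain v1 v2 v3 v4 v5 v6 v7 v8 where d11: "distinct [a,b,c,v1,v2,v3,v4,v5,v6,v7,v8]"
   and a12: "{a,v1,v2} \<in> E" and a34: "{a,v3,v4} \<in> E" and a56: "{a,v5,v6} \<in> E" and a78: "{a,v7,v8} \<in> E"
   and b23: "{b,v2,v3} \<in> E" and b41: "{b,v4,v1} \<in> E" and b67: "{b,v6,v7} \<in> E" and b85: "{b,v8,v5} \<in> E"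
   and acomp: "\<forall>f\<in>E. a \<in> f \<longrightarrow> f = {a,b,c} \<or> f = {a,v1,v2} \<or> f = {a,v3,v4} \<or> f = {a,v5,v6} \<or> f = {a,v7,v8}"
    using struct1[OF L cf e da db dc] by (elim exE conjE) (rule that; assumption)
  have dr: "distinct [v8,v7,v6,v5,v4,v3,v2,v1,c,b,a]" using d11 by auto
  have ain: "w \<in> {a,b,c,v1,v2,v3,v4,v5,v6,v7,v8}" if "{a,w,w'} \<in> E" for w w'
  proof -
    have "w \<in> {a,b,c} \<union> {a,v1,v2} \<union> {a,v3,v4} \<union> {a,v5,v6} \<union> {a,v7,v8}"
      by (rule in5[OF acomp[rule_format, OF that]]) simp_all
    then show ?thesis by blast
  qed
  have "{a,b,c} \<noteq> {b,v2,v3}" by (rule sep[of v2]) (use d11 in auto)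
  moreover have "{a,b,c} \<noteq> {b,v4,v1}" by (rule sep[of v4]) (use d11 in auto)
  moreover have "{a,b,c} \<noteq> {b,v6,v7}" by (rule sep[of v6]) (use d11 in auto)
  moreover have "{a,b,c} \<noteq> {b,v8,v5}" by (rule sep[of v8]) (use d11 in auto)
  moreover have "{b,v2,v3} \<noteq> {b,v4,v1}" by (rule sep[of v4]) (use d11 in auto)
  moreover have "{b,v2,v3} \<noteq> {b,v6,v7}" by (rule sep[of v6]) (use d11 in auto)
  moreover have "{b,v2,v3} \<noteq> {b,v8,v5}" by (rule sep[of v8]) (use d11 in auto)
  moreover have "{b,v4,v1} \<noteq> {b,v6,v7}" by (rule sep[of v6]) (use d11 in auto)
  moreover have "{b,v4,v1} \<noteq> {b,v8,v5}" by (rule sep[of v8]) (use d11 in auto)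
  moreover have "{b,v6,v7} \<noteq> {b,v8,v5}" by (rule sep[of v8]) (use d11 in auto)
  ultimately have "distinct [{a,b,c},{b,v2,v3},{b,v4,v1},{b,v6,v7},{b,v8,v5}]" by simp
  then have bcomp: "\<forall>f\<in>E. b \<in> f \<longrightarrow> f = {a,b,c} \<or> f = {b,v2,v3} \<or> f = {b,v4,v1} \<or> f = {b,v6,v7} \<or> f = {b,v8,v5}"
    by (rule complete5[OF L db e(1) b23 b41 b67 b85, rotated -1]) simp_all
  have ccomp: "\<forall>f\<in>E. c \<in> f \<longrightarrow> f = {a,b,c} \<or> f = {c,v1,v3} \<or> f = {c,v2,v4} \<or> f = {c,v5,v7} \<or> f = {c,v6,v8}"
  proof (intro ballI impI)
    fix f assume fE: "f \<in> E" and cf': "c \<in> f"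
    show "f = {a,b,c} \<or> f = {c,v1,v3} \<or> f = {c,v2,v4} \<or> f = {c,v5,v7} \<or> f = {c,v6,v8}"
    proof (cases "f = {a,b,c}")
      case True then show ?thesis by simp
    next
      case False
      obtain r s where fr: "f = {c,r,s}" "distinct [c,r,s]" using edge3[OF L fE cf'] by blast
      have "a \<notin> f" by (rule lin_ne[OF L fE e(1) cf']) (use False e in auto)
      moreover have "b \<notin> f" by (rule lin_ne[OF L fE e(1) cf']) (use False e in auto)
      ultimately have rab: "r \<noteq> a" "s \<noteq> a" "r \<noteq> b" "s \<noteq> b" using fr by auto
      have cr: "r \<noteq> c" "s \<noteq> c" "r \<noteq> s" using fr by auto
      have F: "{c,r,s} \<in> E" "{c,s,r} \<in> E" "distinct [c,s,r]" using fE fr by (simp_all add: insert_commute, blast)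
      have csr: "{c,s,r} = {c,r,s}" by (simp add: insert_commute)
      have Fne: "{c,r,s} \<noteq> {a,b,c}" "{c,s,r} \<noteq> {a,b,c}" using False fr(1) csr by simp_all
      obtain r' where "{a,r,r'} \<in> E" using cover[OF L cf e _ _ F(1) fr(2) Fne(1)] da db by auto
      then have "r \<in> {a,b,c,v1,v2,v3,v4,v5,v6,v7,v8}" by (rule ain)
      then have rin: "r \<in> {v1,v2,v3,v4,v5,v6,v7,v8}" using rab cr by simp
      obtain s' where "{a,s,s'} \<in> E" using cover[OF L cf e _ _ F(2,3) Fne(2)] da db by auto
      then have "s \<in> {a,b,c,v1,v2,v3,v4,v5,v6,v7,v8}" by (rule ain)
      then have sin: "s \<in> {v1,v2,v3,v4,v5,v6,v7,v8}" using rab cr by simp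
      have dd: "distinct [v1,v2,v3,v4,v5,v6,v7,v8]" using d11 by auto
      have cnot: "c \<notin> {a,v1,v2}" "c \<notin> {a,v3,v4}" "c \<notin> {a,v5,v6}" "c \<notin> {a,v7,v8}"
        "c \<notin> {b,v2,v3}" "c \<notin> {b,v4,v1}" "c \<notin> {b,v6,v7}" "c \<notin> {b,v8,v5}" using d11 by auto
      have l1: "\<not> (r \<in> {v1,v2} \<and> s \<in> {v1,v2})" using lin_both[OF L F(1) a12 _ _ _ _ cr(3) _ cnot(1)] by auto
      have l2: "\<not> (r \<in> {v3,v4} \<and> s \<in> {v3,v4})" using lin_both[OF L F(1) a34 _ _ _ _ cr(3) _ cnot(2)] by auto
      have l3: "\<not> (r \<in> {v5,v6} \<and> s \<in> {v5,v6})" using lin_both[OF L F(1) a56 _ _ _ _ cr(3) _ cnot(3)] by auto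
      have l4: "\<not> (r \<in> {v7,v8} \<and> s \<in> {v7,v8})" using lin_both[OF L F(1) a78 _ _ _ _ cr(3) _ cnot(4)] by auto
      have l5: "\<not> (r \<in> {v2,v3} \<and> s \<in> {v2,v3})" using lin_both[OF L F(1) b23 _ _ _ _ cr(3) _ cnot(5)] by auto
      have l6: "\<not> (r \<in> {v4,v1} \<and> s \<in> {v4,v1})" using lin_both[OF L F(1) b41 _ _ _ _ cr(3) _ cnot(6)] by auto
      have l7: "\<not> (r \<in> {v6,v7} \<and> s \<in> {v6,v7})" using lin_both[OF L F(1) b67 _ _ _ _ cr(3) _ cnot(7)] by auto
      have l8: "\<not> (r \<in> {v8,v5} \<and> s \<in> {v8,v5})" using lin_both[OF L F(1) b85 _ _ _ _ cr(3) _ cnot(8)] by auto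
      have f1: "r \<in> {v1,v2,v6,v7} \<or> s \<in> {v1,v2,v6,v7}"
        by (rule ccontr) (rule crownI[OF cf e(1) a12 b67 F(1)], use cr rab d11 in auto)
      have f2: "r \<in> {v1,v2,v8,v5} \<or> s \<in> {v1,v2,v8,v5}"
        by (rule ccontr) (rule crownI[OF cf e(1) a12 b85 F(1)], use cr rab d11 in auto)
      have f3: "r \<in> {v3,v4,v6,v7} \<or> s \<in> {v3,v4,v6,v7}"
        by (rule ccontr) (rule crownI[OF cf e(1) a34 b67 F(1)], use cr rab d11 in auto)
      have f4: "r \<in> {v3,v4,v8,v5} \<or> s \<in> {v3,v4,v8,v5}"
        by (rule ccontr) (rule crownI[OF cf e(1) a34 b85 F(1)], use cr rab d11 in auto)
      have f5: "r \<in> {v5,v6,v2,v3} \<or> s \<in> {v5,v6,v2,v3}"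
        by (rule ccontr) (rule crownI[OF cf e(1) a56 b23 F(1)], use cr rab d11 in auto)
      have f6: "r \<in> {v5,v6,v4,v1} \<or> s \<in> {v5,v6,v4,v1}"
        by (rule ccontr) (rule crownI[OF cf e(1) a56 b41 F(1)], use cr rab d11 in auto)
      have f7: "r \<in> {v7,v8,v2,v3} \<or> s \<in> {v7,v8,v2,v3}"
        by (rule ccontr) (rule crownI[OF cf e(1) a78 b23 F(1)], use cr rab d11 in auto)
      have f8: "r \<in> {v7,v8,v4,v1} \<or> s \<in> {v7,v8,v4,v1}"
        by (rule ccontr) (rule crownI[OF cf e(1) a78 b41 F(1)], use cr rab d11 in auto)
      have "{r,s} = {v1,v3} \<or> {r,s} = {v2,v4} \<or> {r,s} = {v5,v7} \<or> {r,s} = {v6,v8}"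
        by (rule diag_comb[OF dd rin sin cr(3) f1 f2 f3 f4 f5 f6 f7 f8 l1 l2 l3 l4 l5 l6 l7 l8])
      moreover have "f = insert c {r,s}" using fr(1) by simp
      ultimately show ?thesis by (elim disjE) simp_all
    qed
  qed
  have cdisj: "f = {a,b,c} \<or> f = {c,v1,v3} \<or> f = {c,v2,v4} \<or> f = {c,v5,v7} \<or> f = {c,v6,v8}"
    if "f \<in> E" "c \<in> f" for f using mp[OF bspec[OF ccomp that(1)] that(2)] .
  have nin: "v1 \<notin> {a,b,c}" "v2 \<notin> {a,b,c}" "v3 \<notin> {a,b,c}" "v4 \<notin> {a,b,c}"
    "v5 \<notin> {a,b,c}" "v6 \<notin> {a,b,c}" "v7 \<notin> {a,b,c}" "v8 \<notin> {a,b,c}"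
    "v1 \<notin> {c,v2,v4}" "v1 \<notin> {c,v5,v7}" "v1 \<notin> {c,v6,v8}"
    "v3 \<notin> {c,v2,v4}" "v3 \<notin> {c,v5,v7}" "v3 \<notin> {c,v6,v8}"
    "v2 \<notin> {c,v1,v3}" "v2 \<notin> {c,v5,v7}" "v2 \<notin> {c,v6,v8}"
    "v4 \<notin> {c,v1,v3}" "v4 \<notin> {c,v5,v7}" "v4 \<notin> {c,v6,v8}"
    "v5 \<notin> {c,v1,v3}" "v5 \<notin> {c,v2,v4}" "v5 \<notin> {c,v6,v8}"
    "v7 \<notin> {c,v1,v3}" "v7 \<notin> {c,v2,v4}" "v7 \<notin> {c,v6,v8}"
    "v6 \<notin> {c,v1,v3}" "v6 \<notin> {c,v2,v4}" "v6 \<notin> {c,v5,v7}"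
    "v8 \<notin> {c,v1,v3}" "v8 \<notin> {c,v2,v4}" "v8 \<notin> {c,v5,v7}" using d11 by auto
  have com: "{c,v1,v3} = {c,v3,v1}" "{c,v2,v4} = {c,v4,v2}" "{c,v5,v7} = {c,v7,v5}" "{c,v6,v8} = {c,v8,v6}"
    by (simp_all add: insert_commute)
  have c1: "\<forall>f\<in>E. c \<in> f \<longrightarrow> v1 \<in> f \<longrightarrow> f = {c,v1,v3}"
    using pick_c1[OF cdisj] nin by blast
  have c3': "\<forall>f\<in>E. c \<in> f \<longrightarrow> v3 \<in> f \<longrightarrow> f = {c,v3,v1}"
    using pick_c1[OF cdisj] nin com by metis
  have c2: "\<forall>f\<in>E. c \<in> f \<longrightarrow> v2 \<in> f \<longrightarrow> f = {c,v2,v4}"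
    using pick_c2[OF cdisj] nin by blast
  have c4': "\<forall>f\<in>E. c \<in> f \<longrightarrow> v4 \<in> f \<longrightarrow> f = {c,v4,v2}"
    using pick_c2[OF cdisj] nin com by metis
  have c5': "\<forall>f\<in>E. c \<in> f \<longrightarrow> v5 \<in> f \<longrightarrow> f = {c,v5,v7}"
    using pick_c3[OF cdisj] nin by blast
  have c7: "\<forall>f\<in>E. c \<in> f \<longrightarrow> v7 \<in> f \<longrightarrow> f = {c,v7,v5}"
    using pick_c3[OF cdisj] nin com by metis
  have c6: "\<forall>f\<in>E. c \<in> f \<longrightarrow> v6 \<in> f \<longrightarrow> f = {c,v6,v8}"
    using pick_c4[OF cdisj] nin by blast
  have c8: "\<forall>f\<in>E. c \<in> f \<longrightarrow> v8 \<in> f \<longrightarrow> f = {c,v8,v6}"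
    using pick_c4[OF cdisj] nin com by metis
  have dd: "({c,v1,v3} \<in> E \<or> {c,v2,v4} \<in> E) \<and> ({c,v1,v3} \<in> E \<or> {c,v5,v7} \<in> E) \<and>
     ({c,v1,v3} \<in> E \<or> {c,v6,v8} \<in> E) \<and> ({c,v2,v4} \<in> E \<or> {c,v5,v7} \<in> E) \<and>
     ({c,v2,v4} \<in> E \<or> {c,v6,v8} \<in> E) \<and> ({c,v5,v7} \<in> E \<or> {c,v6,v8} \<in> E)"
    using deg_drop[OF ccomp] dc by auto
  have "distinct [a,b,c,v1,v2,v3,v4,v5,v6,v7,v8]" using d11 by auto
  then have degv1: "degree E v1 \<le> 3"
    by (rule deg_v1[OF L cf, of a b c v1 v2 v3 v4 v5 v6 v7 v8]) (use e a12 a34 a56 a78 b23 b41 b67 b85 c1 dd in \<open>simp_all add: insert_commute disj_comms\<close>)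
  have "distinct [b,a,c,v2,v3,v4,v1,v6,v7,v8,v5]" using d11 by auto
  then have degv2: "degree E v2 \<le> 3"
    by (rule deg_v1[OF L cf, of b a c v2 v3 v4 v1 v6 v7 v8 v5]) (use e a12 a34 a56 a78 b23 b41 b67 b85 c2 dd in \<open>simp_all add: insert_commute disj_comms\<close>)
  have "distinct [a,b,c,v3,v4,v1,v2,v7,v8,v5,v6]" using d11 by auto
  then have degv3: "degree E v3 \<le> 3"
    by (rule deg_v1[OF L cf, of a b c v3 v4 v1 v2 v7 v8 v5 v6]) (use e a12 a34 a56 a78 b23 b41 b67 b85 c3' dd in \<open>simp_all add: insert_commute disj_comms\<close>)
  have "distinct [b,a,c,v4,v1,v2,v3,v8,v5,v6,v7]" using d11 by auto
  then have degv4: "degree E v4 \<le> 3"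
    by (rule deg_v1[OF L cf, of b a c v4 v1 v2 v3 v8 v5 v6 v7]) (use e a12 a34 a56 a78 b23 b41 b67 b85 c4' dd in \<open>simp_all add: insert_commute disj_comms\<close>)
  have "distinct [a,b,c,v5,v6,v7,v8,v1,v2,v3,v4]" using d11 by auto
  then have degv5: "degree E v5 \<le> 3"
    by (rule deg_v1[OF L cf, of a b c v5 v6 v7 v8 v1 v2 v3 v4]) (use e a12 a34 a56 a78 b23 b41 b67 b85 c5' dd in \<open>simp_all add: insert_commute disj_comms\<close>)
  have "distinct [b,a,c,v6,v7,v8,v5,v2,v3,v4,v1]" using d11 by auto
  then have degv6: "degree E v6 \<le> 3"
    by (rule deg_v1[OF L cf, of b a c v6 v7 v8 v5 v2 v3 v4 v1]) (use e a12 a34 a56 a78 b23 b41 b67 b85 c6 dd in \<open>simp_all add: insert_commute disj_comms\<close>)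
  have "distinct [a,b,c,v7,v8,v5,v6,v3,v4,v1,v2]" using d11 by auto
  then have degv7: "degree E v7 \<le> 3"
    by (rule deg_v1[OF L cf, of a b c v7 v8 v5 v6 v3 v4 v1 v2]) (use e a12 a34 a56 a78 b23 b41 b67 b85 c7 dd in \<open>simp_all add: insert_commute disj_comms\<close>)
  have "distinct [b,a,c,v8,v5,v6,v7,v4,v1,v2,v3]" using d11 by auto
  then have degv8: "degree E v8 \<le> 3"
    by (rule deg_v1[OF L cf, of b a c v8 v5 v6 v7 v4 v1 v2 v3]) (use e a12 a34 a56 a78 b23 b41 b67 b85 c8 dd in \<open>simp_all add: insert_commute disj_comms\<close>)
  have allv: "\<forall>x\<in>{v1,v2,v3,v4,v5,v6,v7,v8}. degree E x \<le> 3"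
    using degv1 degv2 degv3 degv4 degv5 degv6 degv7 degv8 by simp
  show ?thesis
  proof (intro ballI impI)
    fix f v w assume fE: "f \<in> E" and v: "v \<in> {a,b,c}" and w: "w \<in> f" and vf: "v \<in> f" and fe: "f \<noteq> {a,b,c}" and wv: "w \<noteq> v"
    have "w \<in> {v1,v2,v3,v4,v5,v6,v7,v8}"
    proof -
      consider "v = a" | "v = b" | "v = c" using v by blast
      then show ?thesis
      proof cases
        case 1
        have "w \<in> ({a,v1,v2} \<union> {a,v3,v4} \<union> {a,v5,v6} \<union> {a,v7,v8}) - {a}"
          by (rule out4[OF mp[OF bspec[OF acomp fE]] fe w]) (use vf wv 1 in simp_all)
        then show ?thesis by auto
      next
        case 2
        have "w \<in> ({b,v2,v3} \<union> {b,v4,v1} \<union> {b,v6,v7} \<union> {b,v8,v5}) - {b}"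
          by (rule out4[OF mp[OF bspec[OF bcomp fE]] fe w]) (use vf wv 2 in simp_all)
        then show ?thesis by auto
      next
        case 3
        have "w \<in> ({c,v1,v3} \<union> {c,v2,v4} \<union> {c,v5,v7} \<union> {c,v6,v8}) - {c}"
          by (rule out4[OF mp[OF bspec[OF ccomp fE]] fe w]) (use vf wv 3 in simp_all)
        then show ?thesis by auto
      qed
    qed
    then show "degree E w \<le> 3" using allv by blast
  qed
qed



definition bad :: "'a set set \<Rightarrow> 'a set \<Rightarrow> bool" where
  "bad E e \<longleftrightarrow> (\<exists>x y z. e = {x,y,z} \<and> distinct [x,y,z] \<and> degree E x = 5 \<and> degree E y = 5 \<and>
     (degree E z = 4 \<or> degree E z = 5))"

definition special :: "'a set set \<Rightarrow> 'a \<Rightarrow> bool" where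
  "special E v \<longleftrightarrow> (\<exists>e\<in>E. bad E e \<and> v \<in> e)"

definition sh :: "'a set set \<Rightarrow> 'a set \<Rightarrow> 'a \<Rightarrow> 'a set \<Rightarrow> real" where
  "sh E S v e = (if degree E v = 1 then 1 else if degree E v = 2 then 1/2
     else if degree E v = 3 then (if e \<inter> S \<noteq> {} then 7/20 else 3/10)
     else if degree E v = 4 then 1/4
     else if degree E v = 5 then (if bad E e then 1/4 else if special E v then 3/16 else 1/5)
     else 0)"

lemma bad_vert: "bad E e \<Longrightarrow> v \<in> e \<Longrightarrow> degree E v = 4 \<or> degree E v = 5"
  unfolding bad_def by auto

lemma L1':
  assumes L: "linear_3graph V E" and cf: "crown_free E" and e: "e \<in> E" "bad E e"
    and f: "f \<in> E" "v \<in> e" "v \<in> f" "f \<noteq> e" "w \<in> f" "w \<noteq> v"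
  shows "degree E w \<le> 3"
proof -
  obtain x y z where xyz: "e = {x,y,z}" "distinct [x,y,z]" "degree E x = 5" "degree E y = 5"
    "degree E z = 4 \<or> degree E z = 5" using e(2) unfolding bad_def by blast
  have "{x,y,z} \<in> E" using e xyz by simp
  moreover have "degree E z \<ge> 4" using xyz(5) by auto
  ultimately have "\<forall>f\<in>E. \<forall>v\<in>{x,y,z}. \<forall>w\<in>f. v \<in> f \<longrightarrow> f \<noteq> {x,y,z} \<longrightarrow> w \<noteq> v \<longrightarrow> degree E w \<le> 3"
    using L1[OF L cf _ xyz(2,3,4)] by blast
  then show ?thesis using f xyz(1) e(2) by blast
qed

lemma bad_unique:
  assumes L: "linear_3graph V E" and cf: "crown_free E" and e: "e1 \<in> E" "bad E e1" "e2 \<in> E" "bad E e2"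
    and v: "v \<in> e1" "v \<in> e2"
  shows "e1 = e2"
proof (rule ccontr)
  assume ne: "e1 \<noteq> e2"
  obtain p q where "e2 = {v,p,q}" "distinct [v,p,q]" using edge3[OF L e(3) v(2)] by blast
  then have "p \<in> e2" "p \<noteq> v" by auto
  then have "degree E p \<le> 3" using L1'[OF L cf e(1,2) e(3) v(1,2)] ne by auto
  moreover have "degree E p = 4 \<or> degree E p = 5" by (rule bad_vert[OF e(4) \<open>p \<in> e2\<close>])
  ultimately show False by auto
qed

lemma card_meetS:
  assumes L: "linear_3graph V E" and S: "finite S" "v \<notin> S"
  shows "card {e\<in>E. v \<in> e \<and> e \<inter> S \<noteq> {}} \<le> card S"
proof -
  let ?F = "\<Union>s\<in>S. {f \<in> E. v \<in> f \<and> s \<in> f}"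
  have "card ?F \<le> (\<Sum>s\<in>S. card {f \<in> E. v \<in> f \<and> s \<in> f})" by (rule card_UN_le[OF S(1)])
  also have "\<dots> \<le> (\<Sum>s\<in>S. 1)"
    by (rule sum_mono, rule card_one_edge[OF L]) (use S(2) in blast)
  finally have "card ?F \<le> card S" by simp
  moreover have "finite ?F" using finE[OF L] by (rule rev_finite_subset) blast
  moreover have "{e\<in>E. v \<in> e \<and> e \<inter> S \<noteq> {}} \<subseteq> ?F" by blast
  ultimately show ?thesis by (meson card_mono le_trans)
qed

lemma sum_const_card:
  assumes "finite A" "\<And>e. e \<in> A \<Longrightarrow> f e = c"
  shows "(\<Sum>e\<in>A. f e) = real (card A) * c"
  using assms by simp

lemma vert_sum:
  assumes L: "linear_3graph V E" and cf: "crown_free E" and S: "finite S" "card S \<le> 2" "v \<notin> S"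
    and dv: "degree E v \<le> 5"
  shows "(\<Sum>e\<in>{e\<in>E. v \<in> e}. sh E S v e) \<le> 1"
proof -
  let ?A = "{e\<in>E. v \<in> e}"
  have fin: "finite ?A" using finE[OF L] by simp
  have cA: "card ?A = degree E v" unfolding degree_def by simp
  consider "degree E v = 0" | "degree E v = 1" | "degree E v = 2" | "degree E v = 3" | "degree E v = 4" | "degree E v = 5"
    using dv by linarith
  then show ?thesis
  proof cases
    case 1
    then have "?A = {}" using fin cA by simp
    then have "(\<Sum>e\<in>?A. sh E S v e) = 0" by (metis sum.empty)
    then show ?thesis by simp
  next
    case 2
    then have "(\<Sum>e\<in>?A. sh E S v e) = real (card ?A) * 1" by (intro sum_const_card[OF fin]) (simp add: sh_def)
    then show ?thesis using cA 2 by simp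
  next
    case 3
    then have "(\<Sum>e\<in>?A. sh E S v e) = real (card ?A) * (1/2)" by (intro sum_const_card[OF fin]) (simp add: sh_def)
    then show ?thesis using cA 3 by simp
  next
    case 5
    then have "(\<Sum>e\<in>?A. sh E S v e) = real (card ?A) * (1/4)" by (intro sum_const_card[OF fin]) (simp add: sh_def)
    then show ?thesis using cA 5 by simp
  next
    case 4
    have "(\<Sum>e\<in>?A. sh E S v e) = (\<Sum>e\<in>?A. 3/10 + (if e \<inter> S \<noteq> {} then 1/20 else 0))"
      by (rule sum.cong) (use 4 in \<open>auto simp: sh_def\<close>)
    also have "\<dots> = real (card ?A) * (3/10) + (\<Sum>e\<in>?A. (if e \<inter> S \<noteq> {} then 1/20 else 0))"
      by (simp add: sum.distrib)
    also have "(\<Sum>e\<in>?A. (if e \<inter> S \<noteq> {} then 1/20 else 0)) = (\<Sum>e\<in>{e\<in>?A. e \<inter> S \<noteq> {}}. (1/20::real))"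
      by (rule sum.inter_filter[OF fin, symmetric])
    also have "\<dots> = real (card {e\<in>E. v \<in> e \<and> e \<inter> S \<noteq> {}}) * (1/20)"
      by (simp add: conj_assoc)
    finally have eq: "(\<Sum>e\<in>?A. sh E S v e) = real (card ?A) * (3/10) + real (card {e\<in>E. v \<in> e \<and> e \<inter> S \<noteq> {}}) * (1/20)" .
    have "card {e\<in>E. v \<in> e \<and> e \<inter> S \<noteq> {}} \<le> 2" using card_meetS[OF L S(1,3)] S(2) by linarith
    then show ?thesis using eq cA 4 by simp
  next
    case 6
    show ?thesis
    proof (cases "special E v")
      case False
      have "(\<Sum>e\<in>?A. sh E S v e) = real (card ?A) * (1/5)"
      proof (intro sum_const_card[OF fin])
        fix e assume "e \<in> ?A"
        then have "\<not> bad E e" using False unfolding special_def by blast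
        then show "sh E S v e = 1/5" using 6 False by (simp add: sh_def)
      qed
      then show ?thesis using cA 6 by simp
    next
      case True
      have "(\<Sum>e\<in>?A. sh E S v e) \<le> (\<Sum>e\<in>?A. 3/16 + (if bad E e then 1/16 else 0))"
        by (rule sum_mono) (use 6 True in \<open>simp add: sh_def\<close>)
      also have "\<dots> = real (card ?A) * (3/16) + (\<Sum>e\<in>?A. (if bad E e then 1/16 else 0))"
        by (simp add: sum.distrib)
      also have "(\<Sum>e\<in>?A. (if bad E e then 1/16 else 0)) = (\<Sum>e\<in>{e\<in>?A. bad E e}. (1/16::real))"
        by (rule sum.inter_filter[OF fin, symmetric])
      also have "\<dots> = real (card {e\<in>?A. bad E e}) * (1/16)" by simp
      finally have le: "(\<Sum>e\<in>?A. sh E S v e) \<le> real (card ?A) * (3/16) + real (card {e\<in>?A. bad E e}) * (1/16)" .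
      have "card {e\<in>?A. bad E e} \<le> 1"
      proof -
        have "\<forall>x\<in>{e\<in>?A. bad E e}. \<forall>y\<in>{e\<in>?A. bad E e}. x = y"
          using bad_unique[OF L cf] by blast
        moreover have "finite {e\<in>?A. bad E e}" using fin by (rule rev_finite_subset) blast
        ultimately show ?thesis using card_le_Suc0_iff_eq[of "{e\<in>?A. bad E e}"] by simp
      qed
      then show ?thesis using le cA 6 by simp
    qed
  qed
qed



definition g5 :: "nat \<Rightarrow> real" where
  "g5 d = (if d = 1 then 1 else if d = 2 then 1/2 else if d = 3 then 3/10 else if d = 4 then 1/4 else 1/5)"

lemma arith_noS:
  fixes p q r :: nat
  assumes "1 \<le> p" "p \<le> 5" "1 \<le> q" "q \<le> 5" "1 \<le> r" "r \<le> 5"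
    and "\<not> (p = 5 \<and> q = 5 \<and> (r = 4 \<or> r = 5))" "\<not> (p = 5 \<and> r = 5 \<and> (q = 4 \<or> q = 5))"
    "\<not> (q = 5 \<and> r = 5 \<and> (p = 4 \<or> p = 5))"
  shows "7/10 \<le> g5 p + g5 q + g5 r"
proof -
  have "p \<in> {1,2,3,4,5}" "q \<in> {1,2,3,4,5}" "r \<in> {1,2,3,4,5}" using assms(1-6) by auto
  then show ?thesis using assms(7-9) unfolding g5_def by (elim insertE emptyE) simp_all
qed

definition h5 :: "nat \<Rightarrow> real" where
  "h5 d = (if d = 1 then 1 else if d = 2 then 1/2 else if d = 3 then 7/20 else 3/16)"

lemma arith_oneS:
  fixes p q :: nat
  assumes "1 \<le> p" "p \<le> 5" "1 \<le> q" "q \<le> 5"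
    and "\<not> (2 \<le> p \<and> 4 \<le> q)" "\<not> (2 \<le> q \<and> 4 \<le> p)"
  shows "7/10 \<le> h5 p + h5 q"
proof -
  have "p \<in> {1,2,3,4,5}" "q \<in> {1,2,3,4,5}" using assms(1-4) by auto
  then show ?thesis using assms(5,6) unfolding h5_def by (elim insertE emptyE) simp_all
qed

lemma deg_pos:
  assumes L: "linear_3graph V E" and "e \<in> E" "v \<in> e"
  shows "1 \<le> degree E v"
proof -
  have "finite {f\<in>E. v \<in> f}" using finE[OF L] by simp
  moreover have "e \<in> {f\<in>E. v \<in> f}" using assms by simp
  ultimately show ?thesis unfolding degree_def by (metis One_nat_def card_gt_0_iff empty_iff Suc_leI)
qed

lemma in_V: "linear_3graph V E \<Longrightarrow> e \<in> E \<Longrightarrow> v \<in> e \<Longrightarrow> v \<in> V"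
  unfolding linear_3graph_def by auto

lemma sh_lb: "1 \<le> degree E v \<Longrightarrow> degree E v \<le> 5 \<Longrightarrow> 3/16 \<le> sh E S v e"
  unfolding sh_def by auto

lemma sh_lb3: "1 \<le> degree E v \<Longrightarrow> degree E v \<le> 3 \<Longrightarrow> 3/10 \<le> sh E S v e"
  unfolding sh_def by auto

lemma sh_h5: "1 \<le> degree E v \<Longrightarrow> degree E v \<le> 5 \<Longrightarrow> e \<inter> S \<noteq> {} \<Longrightarrow> h5 (degree E v) \<le> sh E S v e"
  unfolding sh_def h5_def by auto

lemma twoS:
  assumes L: "linear_3graph V E" and cf: "crown_free E" and SV: "S = {v\<in>V. 6 \<le> degree E v}"
    and e: "e \<in> E" "e = {x,y,z}" "distinct [x,y,z]" and xyz: "x \<in> S" "y \<in> S" "z \<notin> S"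
  shows "sh E S z e = 1"
proof -
  have "1 \<le> degree E z" using deg_pos[OF L e(1)] e(2) by simp
  moreover have "\<not> 2 \<le> degree E z"
  proof
    assume "2 \<le> degree E z"
    moreover have "{z,x,y} \<in> E" using e by (simp add: insert_commute)
    moreover have "distinct [z,x,y]" using e(3) by auto
    ultimately show False using crown246[OF L cf] xyz SV by force
  qed
  ultimately show ?thesis unfolding sh_def by simp
qed

lemma oneS:
  assumes L: "linear_3graph V E" and cf: "crown_free E" and SV: "S = {v\<in>V. 6 \<le> degree E v}"
    and e: "e \<in> E" "e = {x,y,z}" "distinct [x,y,z]" and xyz: "x \<in> S" "y \<notin> S" "z \<notin> S"
  shows "7/10 \<le> sh E S y e + sh E S z e"
proof -
  have yV: "y \<in> V" "z \<in> V" using in_V[OF L e(1)] e(2) by auto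
  have d: "1 \<le> degree E y" "1 \<le> degree E z" using deg_pos[OF L e(1)] e(2) by auto
  have d5: "degree E y \<le> 5" "degree E z \<le> 5" using xyz yV SV by auto
  have dx: "6 \<le> degree E x" using xyz SV by auto
  have eS: "e \<inter> S \<noteq> {}" using xyz e(2) by auto
  have c1: "\<not> (2 \<le> degree E y \<and> 4 \<le> degree E z)"
  proof
    assume "2 \<le> degree E y \<and> 4 \<le> degree E z"
    moreover have "{y,z,x} \<in> E" using e by (simp add: insert_commute)
    moreover have "distinct [y,z,x]" using e(3) by auto
    ultimately show False using crown246[OF L cf] dx by blast
  qed
  have c2: "\<not> (2 \<le> degree E z \<and> 4 \<le> degree E y)"
  proof
    assume "2 \<le> degree E z \<and> 4 \<le> degree E y"
    moreover have "{z,y,x} \<in> E" using e by (simp add: insert_commute)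
    moreover have "distinct [z,y,x]" using e(3) by auto
    ultimately show False using crown246[OF L cf] dx by blast
  qed
  have "7/10 \<le> h5 (degree E y) + h5 (degree E z)" by (rule arith_oneS) (use d d5 c1 c2 in auto)
  moreover have "h5 (degree E y) \<le> sh E S y e" "h5 (degree E z) \<le> sh E S z e"
    using sh_h5[OF _ _ eS] d d5 by auto
  ultimately show ?thesis by linarith
qed

lemma spec1:
  assumes L: "linear_3graph V E" and cf: "crown_free E" and SV: "S = {v\<in>V. 6 \<le> degree E v}"
    and e: "e \<in> E" "e = {x,y,z}" "distinct [x,y,z]" and xyz: "x \<notin> S" "y \<notin> S" "z \<notin> S"
    and nb: "\<not> bad E e" and sp: "special E x"
  shows "7/10 \<le> sh E S x e + sh E S y e + sh E S z e"
proof -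
  have V: "x \<in> V" "y \<in> V" "z \<in> V" using in_V[OF L e(1)] e(2) by auto
  have d: "1 \<le> degree E x" "1 \<le> degree E y" "1 \<le> degree E z" using deg_pos[OF L e(1)] e(2) by auto
  have d5: "degree E x \<le> 5" using xyz V SV by auto
  obtain e' where e': "e' \<in> E" "bad E e'" "x \<in> e'" using sp unfolding special_def by blast
  have "e \<noteq> e'" using nb e'(2) by blast
  then have "degree E y \<le> 3" "degree E z \<le> 3"
    using L1'[OF L cf e'(1,2) e(1) e'(3)] e(2,3) by auto
  then have "3/10 \<le> sh E S y e" "3/10 \<le> sh E S z e" using sh_lb3 d by auto
  moreover have "3/16 \<le> sh E S x e" using sh_lb d d5 by auto
  ultimately show ?thesis by linarith
qed

lemma noS:
  assumes L: "linear_3graph V E" and cf: "crown_free E" and SV: "S = {v\<in>V. 6 \<le> degree E v}"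
    and e: "e \<in> E" "e = {x,y,z}" "distinct [x,y,z]" and xyz: "x \<notin> S" "y \<notin> S" "z \<notin> S"
  shows "7/10 \<le> sh E S x e + sh E S y e + sh E S z e"
proof -
  have V: "x \<in> V" "y \<in> V" "z \<in> V" using in_V[OF L e(1)] e(2) by auto
  have d: "1 \<le> degree E x" "1 \<le> degree E y" "1 \<le> degree E z" using deg_pos[OF L e(1)] e(2) by auto
  have d5: "degree E x \<le> 5" "degree E y \<le> 5" "degree E z \<le> 5" using xyz V SV by auto
  have eS: "e \<inter> S = {}" using xyz e(2) by auto
  show ?thesis
  proof (cases "bad E e")
    case True
    have "sh E S v e = 1/4" if "v \<in> e" for v using bad_vert[OF True that] True unfolding sh_def by auto
    then have "sh E S x e = 1/4" "sh E S y e = 1/4" "sh E S z e = 1/4" using e(2) by auto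
    then show ?thesis by simp
  next
    case nb: False
    show ?thesis
    proof (cases "special E x \<or> special E y \<or> special E z")
      case True
      then show ?thesis
      proof (elim disjE)
        assume "special E x" then show ?thesis using spec1[OF L cf SV e xyz nb] by simp
      next
        assume "special E y"
        moreover have "e = {y,x,z}" "distinct [y,x,z]" using e by (auto simp: insert_commute)
        ultimately show ?thesis using spec1[OF L cf SV e(1) _ _ _ _ _ nb, of y x z] xyz by simp
      next
        assume "special E z"
        moreover have "e = {z,x,y}" "distinct [z,x,y]" using e by (auto simp: insert_commute)
        ultimately show ?thesis using spec1[OF L cf SV e(1) _ _ _ _ _ nb, of z x y] xyz by simp
      qed
    next
      case False
      have g: "sh E S v e = g5 (degree E v)" if "v \<in> {x,y,z}" for v
        using that False nb eS d d5 unfolding sh_def g5_def by auto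
      have n1: "\<not> (degree E x = 5 \<and> degree E y = 5 \<and> (degree E z = 4 \<or> degree E z = 5))"
        using nb e unfolding bad_def by blast
      have n2: "\<not> (degree E x = 5 \<and> degree E z = 5 \<and> (degree E y = 4 \<or> degree E y = 5))"
      proof
        assume H: "degree E x = 5 \<and> degree E z = 5 \<and> (degree E y = 4 \<or> degree E y = 5)"
        have "e = {x,z,y}" "distinct [x,z,y]" using e by (auto simp: insert_commute)
        then have "bad E e" using H unfolding bad_def by blast
        then show False using nb by simp
      qed
      have n3: "\<not> (degree E y = 5 \<and> degree E z = 5 \<and> (degree E x = 4 \<or> degree E x = 5))"
      proof
        assume H: "degree E y = 5 \<and> degree E z = 5 \<and> (degree E x = 4 \<or> degree E x = 5)"
        have "e = {y,z,x}" "distinct [y,z,x]" using e by (auto simp: insert_commute)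
        then have "bad E e" using H unfolding bad_def by blast
        then show False using nb by simp
      qed
      have "7/10 \<le> g5 (degree E x) + g5 (degree E y) + g5 (degree E z)"
        by (rule arith_noS) (use d d5 n1 n2 n3 in auto)
      then show ?thesis using g by simp
    qed
  qed
qed



lemma edge_sum:
  assumes L: "linear_3graph V E" and cf: "crown_free E" and SV: "S = {v\<in>V. 6 \<le> degree E v}"
    and cS: "card S \<le> 2" and eE: "e \<in> E"
  shows "7/10 \<le> (\<Sum>v\<in>e-S. sh E S v e)"
proof -
  have c3e: "card e = 3" using L eE unfolding linear_3graph_def by auto
  then obtain v where "v \<in> e" by (metis card.empty ex_in_conv zero_neq_numeral)
  then obtain y z where "e = {v,y,z}" "distinct [v,y,z]" using edge3[OF L eE] by blast
  then obtain x where e: "e = {x,y,z}" "distinct [x,y,z]" by blast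
  have fe: "finite e" using e by simp
  have finS: "finite S" using L SV unfolding linear_3graph_def by auto
  let ?G = "\<lambda>v. if v \<in> S then 0 else sh E S v e"
  have "(\<Sum>v\<in>e-S. sh E S v e) = (\<Sum>v\<in>{v\<in>e. v \<notin> S}. sh E S v e)"
    by (rule sum.cong) auto
  also have "\<dots> = (\<Sum>v\<in>e. if v \<notin> S then sh E S v e else 0)" by (rule sum.inter_filter[OF fe])
  also have "\<dots> = ?G x + ?G y + ?G z" using e by (simp add: if_distrib)
  finally have eq: "(\<Sum>v\<in>e-S. sh E S v e) = ?G x + ?G y + ?G z" .
  have sh0: "0 \<le> sh E S w e" for w unfolding sh_def by auto
  have "7/10 \<le> ?G x + ?G y + ?G z"
  proof (cases "x \<in> S")
    case xS: True
    show ?thesis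
    proof (cases "y \<in> S")
      case yS: True
      show ?thesis
      proof (cases "z \<in> S")
        case True
        then have "{x,y,z} \<subseteq> S" using xS yS by simp
        then have "card {x,y,z} \<le> card S" using finS by (rule card_mono[rotated])
        moreover have "card {x,y,z} = 3" using e(2) by simp
        ultimately show ?thesis using cS by simp
      next
        case False
        then show ?thesis using twoS[OF L cf SV eE e xS yS False] xS yS by simp
      qed
    next
      case yS: False
      show ?thesis
      proof (cases "z \<in> S")
        case True
        have e': "e = {x,z,y}" "distinct [x,z,y]" using e by (auto simp: insert_commute)
        show ?thesis using twoS[OF L cf SV eE e' xS True yS] xS True yS by simp
      next
        case False
        show ?thesis using oneS[OF L cf SV eE e xS yS False] xS yS False by simp
      qed
    qed
  next
    case xS: False
    show ?thesis
    proof (cases "y \<in> S")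
      case yS: True
      show ?thesis
      proof (cases "z \<in> S")
        case True
        have e': "e = {y,z,x}" "distinct [y,z,x]" using e by (auto simp: insert_commute)
        show ?thesis using twoS[OF L cf SV eE e' yS True xS] xS True yS by simp
      next
        case False
        have e': "e = {y,x,z}" "distinct [y,x,z]" using e by (auto simp: insert_commute)
        show ?thesis using oneS[OF L cf SV eE e' yS xS False] xS yS False by simp
      qed
    next
      case yS: False
      show ?thesis
      proof (cases "z \<in> S")
        case True
        have e': "e = {z,x,y}" "distinct [z,x,y]" using e by (auto simp: insert_commute)
        show ?thesis using oneS[OF L cf SV eE e' True xS yS] xS True yS by simp
      next
        case False
        show ?thesis using noS[OF L cf SV eE e xS yS False] xS yS False by simp
      qed
    qed
  qed
  then show ?thesis using eq by simp
qed

theorem theorem1p2: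
  fixes V :: "'a set" and E :: "'a set set"
  assumes "linear_3graph V E"
    and "crown_free E"
    and "card {v \<in> V. degree E v \<ge> 6} \<le> 2"
  shows "real (card E) \<le> 10 * (real (card V) - real (card {v \<in> V. degree E v \<ge> 6})) / 7"
proof -
  define S where "S = {v \<in> V. degree E v \<ge> 6}"
  have L: "linear_3graph V E" and cf: "crown_free E" using assms by auto
  have cS: "card S \<le> 2" using assms(3) S_def by simp
  have SV: "S = {v\<in>V. 6 \<le> degree E v}" using S_def by simp
  have finV: "finite V" using L unfolding linear_3graph_def by auto
  have finE: "finite E" by (rule finE[OF L])
  have sub: "S \<subseteq> V" using S_def by auto
  have eV: "e \<subseteq> V" if "e \<in> E" for e using L that unfolding linear_3graph_def by auto
  have "(\<Sum>e\<in>E. (7/10::real)) \<le> (\<Sum>e\<in>E. \<Sum>v\<in>e-S. sh E S v e)"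
    by (rule sum_mono) (rule edge_sum[OF L cf SV cS])
  also have "\<dots> = (\<Sum>e\<in>E. \<Sum>v\<in>{v. v \<in> V - S \<and> v \<in> e}. sh E S v e)"
    by (rule sum.cong[OF refl], rule sum.cong) (use eV in auto)
  also have "\<dots> = (\<Sum>v\<in>V-S. \<Sum>e\<in>{e. e \<in> E \<and> v \<in> e}. sh E S v e)"
    by (rule sum.swap_restrict) (use finE finV in auto)
  also have "\<dots> \<le> (\<Sum>v\<in>V-S. (1::real))"
  proof (rule sum_mono)
    fix v assume v: "v \<in> V - S"
    then have "degree E v \<le> 5" using SV by auto
    moreover have "finite S" using finV sub by (rule rev_finite_subset)
    ultimately show "(\<Sum>e\<in>{e. e \<in> E \<and> v \<in> e}. sh E S v e) \<le> 1"
      using vert_sum[OF L cf _ cS, of v] v by auto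
  qed
  also have "\<dots> = real (card (V - S))" by simp
  also have "card (V - S) = card V - card S" using card_Diff_subset[OF _ sub] finV sub
    by (meson rev_finite_subset)
  finally have "real (card E) * (7/10) \<le> real (card V - card S)" by simp
  moreover have "card S \<le> card V" using card_mono[OF finV sub] .
  ultimately have "real (card E) * (7/10) \<le> real (card V) - real (card S)" by (simp add: of_nat_diff)
  then show ?thesis unfolding S_def by simp
qed

end
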